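(* Let $S\subset\mathcal P$ be finite and let $\Delta$ be a bounded region of $\mathcal L_S$ with $n$ sides, with $P_k$, $D_k$ ($k\in\mathbb{Z}/n\mathbb{Z}$) as in the context. Fix $k$. Let $M$ be the line in $\mathcal P$ through $P_k$ parallel to $\overleftrightarrow{OP_{k+1}}$ (it does not pass through $O$), and for $P\in M$ let $m(P)=\overleftrightarrow{PP_{k+1}}$. Starting from $P=P_k$, move $P$ along $M$ to the right if $D_{k+1}=r$ and to the left if $D_{k+1}=l$, and let $P^*$ be the first position at which $m(P)$ contains a point of $S$ not lying on $\overleftrightarrow{P_kP_{k+1}}$. Let $Q_0=P_{k+1},Q_1,\dots,Q_q$ be the points of $m(P^* )\cap S$, indexed in the order in which they are met when starting at $Q_0$ and moving along $m(P^* )$ in the direction away from $P^*$, wrapping around through infinity to the opposite end of $m(P^* )$ if necessary. Then $P_{k+2}=Q_q$ if $D_k=D_{k+1}$, and $P_{k+2}=Q_1$ if $D_k\neq D_{k+1}$.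
   Context: $\mathcal P=\mathbb{R}^2\setminus\{(0,0)\}$ is the coefficient plane, with origin denoted $O$ (also $O$ denotes the origin of $\mathbb{R}^2$); for $P=(A,B)\in\mathcal P$, $L_P$ is the line $Ax+By=1$ in $\mathbb{R}^2$; $\mathcal L_S=\{L_P\mid P\in S\}$. For $P=(A,B),Q=(A',B')$, $Q$ is to the left of $P$ if $AB'-BA'>0$ and to the right if $AB'-BA'<0$. Moving "to the right" (resp. "left") along a line not through $O$ means moving in the direction of points that are to the right (resp. left) of the current point. For finite $S$, regions of $\mathcal L_S$ are the closures of the connected components of $\mathbb{R}^2\setminus\bigcup_{P\in S}L_P$. For a bounded region $\Delta$ with $n$ sides, $L_k$ ($k\in\mathbb{Z}/n\mathbb{Z}$) are the lines containing the sides of $\Delta$ in clockwise order around $\Delta$, $P_k\in S$ is the point with $L_{P_k}=L_k$, and $D_k\in\{l,r\}$ is the side of $L_k$ on which the origin of $\mathbb{R}^2$ lies for a traveller moving along the side of $\Delta$ on $L_k$ clockwise around $\Delta$ (with $\Delta$ on the traveller's right). *)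

theory Defs
  imports "HOL-Analysis.Analysis"
begin

text \<open>Points of the plane (both the coefficient plane and the plane of the lines)
  are pairs of reals. cross P Q = A B' - B A' for P = (A,B), Q = (A',B').\<close>

definition cross :: "real \<times> real \<Rightarrow> real \<times> real \<Rightarrow> real" where
  "cross P Q = fst P * snd Q - snd P * fst Q"

definition Lline :: "real \<times> real \<Rightarrow> (real \<times> real) set" where
  "Lline P = {x. fst P * fst x + snd P * snd x = 1}"

definition regions :: "(real \<times> real) set \<Rightarrow> (real \<times> real) set set" where
  "regions S = closure ` components (UNIV - (\<Union>P\<in>S. Lline P))"

definition left_of :: "real \<times> real \<Rightarrow> real \<times> real \<Rightarrow> bool" where
  "left_of P Q \<longleftrightarrow> cross P Q > 0"
definition right_of :: "real \<times> real \<Rightarrow> real \<times> real \<Rightarrow> bool" where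
  "right_of P Q \<longleftrightarrow> cross P Q < 0"

definition line_thru :: "real \<times> real \<Rightarrow> real \<times> real \<Rightarrow> (real \<times> real) set" where
  "line_thru a b = {a + t *\<^sub>R (b - a) | t. True}"

datatype side = Lft | Rgt

text \<open>Side of the (directed) line from a to b on which the origin lies, for a
  traveller moving from a to b.\<close>
definition origin_side :: "real \<times> real \<Rightarrow> real \<times> real \<Rightarrow> side" where
  "origin_side a b = (if cross (b - a) (0 - a) > 0 then Lft else Rgt)"

text \<open>Cyclic order on the line through Q0 (with P on it, P \<noteq> Q0):
  cyc_before P Q0 Q Q' means that, starting at Q0 and moving along the line in the
  direction away from P (wrapping around through infinity), Q is met strictly
  before Q'.\<close>
definition cyc_before ::
  "real \<times> real \<Rightarrow> real \<times> real \<Rightarrow> real \<times> real \<Rightarrow> real \<times> real \<Rightarrow> bool" where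
  "cyc_before P Q0 Q Q' \<longleftrightarrow>
     (\<exists>a b. Q = Q0 + a *\<^sub>R (Q0 - P) \<and> Q' = Q0 + b *\<^sub>R (Q0 - P) \<and> a \<noteq> 0 \<and> b \<noteq> 0 \<and>
        ((0 < a \<and> b < 0) \<or> (0 < a * b \<and> a < b)))"

end

theory Submission imports Defs begin
definition dt :: "real \<times> real \<Rightarrow> real \<times> real \<Rightarrow> real" where
  "dt P x = fst P * fst x + snd P * snd x"

lemma dt_add_right: "dt P (x + y) = dt P x + dt P y"
  by (simp add: dt_def algebra_simps)
lemma dt_diff_right: "dt P (x - y) = dt P x - dt P y"
  by (simp add: dt_def algebra_simps)
lemma dt_scale_right: "dt P (c *\<^sub>R x) = c * dt P x"
  by (simp add: dt_def algebra_simps)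
lemma dt_add_left: "dt (x + y) P = dt x P + dt y P"
  by (simp add: dt_def algebra_simps)
lemma dt_diff_left: "dt (x - y) P = dt x P - dt y P"
  by (simp add: dt_def algebra_simps)
lemma dt_scale_left: "dt (c *\<^sub>R x) P = c * dt x P"
  by (simp add: dt_def algebra_simps)
lemma dt_neg_left: "dt (- x) P = - dt x P"
  by (simp add: dt_def algebra_simps)
lemma dt_comm: "dt P x = dt x P"
  by (simp add: dt_def algebra_simps)
lemma dt_inner: "dt P x = inner P x"
  by (cases P, cases x) (simp add: dt_def)
lemma Lline_dt: "x \<in> Lline P \<longleftrightarrow> dt P x = 1"
  by (simp add: Lline_def dt_def)

lemmas dt_lin = dt_add_right dt_diff_right dt_scale_right dt_add_left dt_diff_left dt_scale_left dt_neg_left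

lemma LL:
  assumes "dt P a = 1" "dt P b = 1"
  shows "(dt P x - 1) * cross (b - a) (0 - a) = - cross (b - a) (x - a)"
proof -
  obtain p q where P: "P = (p,q)" by (cases P)
  obtain a1 a2 where A: "a = (a1,a2)" by (cases a)
  obtain b1 b2 where B: "b = (b1,b2)" by (cases b)
  obtain x1 x2 where X: "x = (x1,x2)" by (cases x)
  have h1: "p*a1+q*a2 = 1" "p*b1+q*b2=1" using assms by (auto simp: dt_def P A B)
  show ?thesis using h1 unfolding P A B X dt_def cross_def apply simp
    by algebra
qed

lemma collin:
  assumes "dt P a = 1" "dt P b = 1" "dt P c = 1"
  shows "cross (b - a) (c - b) = 0"
proof -
  have "- cross (b - a) (c - a) = 0" using LL[OF assms(1,2), of c] assms(3) by simp
  then show ?thesis by (cases a, cases b, cases c) (simp add: cross_def algebra_simps)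
qed

lemma par_mult:
  assumes "w \<noteq> 0" "cross w z = 0"
  shows "z = (dt z w / dt w w) *\<^sub>R w"
proof -
  obtain w1 w2 where W: "w = (w1,w2)" by (cases w)
  obtain z1 z2 where Z: "z = (z1,z2)" by (cases z)
  have c: "w1*z2 - w2*z1 = 0" using assms(2) by (simp add: cross_def W Z)
  have nz: "w1*w1 + w2*w2 \<noteq> 0"
  proof
    assume "w1*w1 + w2*w2 = 0"
    then have "w1 = 0 \<and> w2 = 0" using zero_le_square[of w1] zero_le_square[of w2] by (auto simp: add_nonneg_eq_0_iff)
    then show False using assms(1) W by (simp add: zero_prod_def)
  qed
  have f1: "z1*(w1*w1+w2*w2) = (z1*w1+z2*w2)*w1" using c by algebra
  have f2: "z2*(w1*w1+w2*w2) = (z1*w1+z2*w2)*w2" using c by algebra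
  have e1: "z1 = (z1*w1 + z2*w2) / (w1*w1+w2*w2) * w1"
    using nz f1 by (simp add: field_simps)
  have e2: "z2 = (z1*w1 + z2*w2) / (w1*w1+w2*w2) * w2"
    using nz f2 by (simp add: field_simps)
  show ?thesis using e1 e2 by (simp add: W Z dt_def)
qed

lemma line_dual:
  assumes "X \<noteq> Y" "dt X y = 1" "dt Y y = 1"
  shows "Q \<in> line_thru X Y \<longleftrightarrow> dt Q y = 1"
proof
  assume "Q \<in> line_thru X Y"
  then obtain t where "Q = X + t *\<^sub>R (Y - X)" by (auto simp: line_thru_def)
  then show "dt Q y = 1" using assms by (simp add: dt_lin)
next
  assume q: "dt Q y = 1"
  have "(dt y Q - 1) * cross (Y - X) (0 - X) = - cross (Y - X) (Q - X)"
    using LL[of y X Y Q] assms by (simp add: dt_comm)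
  then have "cross (Y - X) (Q - X) = 0" using q by (simp add: dt_comm)
  moreover have "Y - X \<noteq> 0" using assms(1) by simp
  ultimately have "Q - X = (dt (Q - X) (Y - X) / dt (Y - X) (Y - X)) *\<^sub>R (Y - X)"
    using par_mult by blast
  then have "Q = X + (dt (Q - X) (Y - X) / dt (Y - X) (Y - X)) *\<^sub>R (Y - X)"
    by (metis add.commute diff_add_cancel)
  then show "Q \<in> line_thru X Y" unfolding line_thru_def by blast
qed

lemma region_side:
  assumes "\<Delta> \<in> regions S" "Q \<in> S"
  shows "(\<forall>x\<in>\<Delta>. dt Q x \<le> 1) \<or> (\<forall>x\<in>\<Delta>. dt Q x \<ge> 1)"
proof -
  obtain C where C: "C \<in> components (UNIV - (\<Union>P\<in>S. Lline P))" "\<Delta> = closure C"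
    using assms(1) unfolding regions_def by blast
  have conn: "connected C" using C(1) in_components_connected by blast
  have sub: "C \<subseteq> UNIV - (\<Union>P\<in>S. Lline P)" using C(1) in_components_subset by blast
  have ne: "\<forall>x\<in>C. inner Q x \<noteq> 1" using sub assms(2) by (auto simp: Lline_dt dt_inner)
  have "(\<forall>x\<in>C. inner Q x \<le> 1) \<or> (\<forall>x\<in>C. inner Q x \<ge> 1)"
  proof (rule ccontr)
    assume "\<not> ?thesis"
    then obtain x y where xy: "x \<in> C" "y \<in> C" "inner Q x > 1" "inner Q y < 1" by force
    then obtain z where "z \<in> C" "inner Q z = 1"
      using connected_ivt_hyperplane[OF conn xy(2) xy(1), of Q 1] by auto
    then show False using ne by blast
  qed
  then show ?thesis
  proof
    assume "\<forall>x\<in>C. inner Q x \<le> 1"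
    then have "closure C \<subseteq> {x. inner Q x \<le> 1}"
      by (intro closure_minimal closed_halfspace_le) auto
    then show ?thesis using C(2) by (auto simp: dt_inner)
  next
    assume "\<forall>x\<in>C. inner Q x \<ge> 1"
    then have "closure C \<subseteq> {x. inner Q x \<ge> 1}"
      by (intro closure_minimal closed_halfspace_ge) auto
    then show ?thesis using C(2) by (auto simp: dt_inner)
  qed
qed

lemma I1:
  assumes "dt P a = 1" "dt P b = 1" "dt Q b = 1" "dt Q c = 1"
  shows "cross P Q * cross (b - a) (0 - a) * cross (c - b) (0 - b) = cross (b - a) (c - b)"
proof -
  obtain p q where P: "P = (p,q)" by (cases P)
  obtain p' q' where Q: "Q = (p',q')" by (cases Q)
  obtain a1 a2 where A: "a = (a1,a2)" by (cases a)
  obtain b1 b2 where B: "b = (b1,b2)" by (cases b)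
  obtain c1 c2 where C: "c = (c1,c2)" by (cases c)
  have h: "p*a1+q*a2 = 1" "p*b1+q*b2=1" "p'*b1+q'*b2 = 1" "p'*c1+q'*c2=1"
    using assms by (auto simp: dt_def P A B Q C)
  show ?thesis using h unfolding P A B C Q dt_def cross_def apply simp
    by algebra
qed

lemma I2:
  assumes "dt Q b = 1" "dt Q c = 1"
  shows "dt P (c - b) = - cross (c - b) (0 - b) * cross P Q"
proof -
  obtain p q where P: "P = (p,q)" by (cases P)
  obtain p' q' where Q: "Q = (p',q')" by (cases Q)
  obtain b1 b2 where B: "b = (b1,b2)" by (cases b)
  obtain c1 c2 where C: "c = (c1,c2)" by (cases c)
  have h: "p'*b1+q'*b2 = 1" "p'*c1+q'*c2=1"
    using assms by (auto simp: dt_def P B Q C)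
  show ?thesis using h unfolding P B C Q dt_def cross_def apply simp
    by algebra
qed

theorem theorem3p13:
  fixes S \<Delta> :: "(real \<times> real) set" and n k :: nat and v p :: "nat \<Rightarrow> real \<times> real"
  assumes "finite S" and "(0, 0) \<notin> S"
    and "\<Delta> \<in> regions S" and "bounded \<Delta>"
    and "n \<ge> 3"
    and "\<forall>j. v (j + n) = v j"
    and "inj_on v {..<n}"
    and "\<Delta> = convex hull (v ` {..<n})"
    and "\<forall>j. p j \<in> S \<and> v j \<in> Lline (p j) \<and> v (Suc j) \<in> Lline (p j)"
    and "\<forall>j. \<forall>x\<in>\<Delta>. cross (v (Suc j) - v j) (x - v j) \<le> 0"
    and "\<forall>j. cross (v (Suc j) - v j) (v (Suc (Suc j)) - v (Suc j)) < 0"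
  shows
    "let D = (\<lambda>j. origin_side (v j) (v (Suc j)));
         P0 = p k; P1 = p (k + 1)
     in \<forall>d. (d = P1 \<or> d = - P1) \<and>
            (if D (k + 1) = Rgt then right_of P0 (P0 + d) else left_of P0 (P0 + d))
          \<longrightarrow>
          (let hit = (\<lambda>t. \<exists>Q\<in>S. Q \<in> line_thru (P0 + t *\<^sub>R d) P1 \<and> Q \<notin> line_thru P0 P1);
               first = (\<lambda>t. 0 \<le> t \<and> hit t \<and> (\<forall>s. 0 \<le> s \<and> s < t \<longrightarrow> \<not> hit s))
           in (\<exists>t. first t) \<and>
              (\<forall>t. first t \<longrightarrow>
                 (let Pst = P0 + t *\<^sub>R d;
                      Qs = (line_thru Pst P1 \<inter> S) - {P1}
                  in p (k + 2) \<in> Qs \<and>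
                     (if D k = D (k + 1)
                      then (\<forall>Q\<in>Qs. \<not> cyc_before Pst P1 (p (k + 2)) Q)
                      else (\<forall>Q\<in>Qs. \<not> cyc_before Pst P1 Q (p (k + 2)))))))"
proof -
  have per: "v (i + m * n) = v i" for i m
  proof (induction m)
    case 0 then show ?case by simp
  next
    case (Suc m)
    have "v (i + Suc m * n) = v ((i + m * n) + n)" by (simp add: algebra_simps)
    also have "\<dots> = v (i + m * n)" using assms(6) by blast
    finally show ?case using Suc by simp
  qed
  have vin: "v j \<in> \<Delta>" for j
  proof -
    have "v j = v (j mod n)" using per[of "j mod n" "j div n"] by (simp add: mod_div_mult_eq)
    moreover have "j mod n < n" using assms(5) by simp
    ultimately have "v j \<in> v ` {..<n}" by blast
    then show ?thesis using assms(8) hull_subset[of "v ` {..<n}" convex] by auto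
  qed
  have side: "\<And>Q. Q \<in> S \<Longrightarrow> (\<forall>x\<in>\<Delta>. dt Q x \<le> 1) \<or> (\<forall>x\<in>\<Delta>. dt Q x \<ge> 1)"
    using region_side[OF assms(3)] by blast
  have pj: "p j \<in> S \<and> dt (p j) (v j) = 1 \<and> dt (p j) (v (Suc j)) = 1" for j
    using assms(9) by (simp add: Lline_dt)
  let ?v0 = "v k" and ?v1 = "v (Suc k)" and ?v2 = "v (Suc (Suc k))" and ?v3 = "v (Suc (Suc (Suc k)))"
  let ?P0 = "p k" and ?P1 = "p (Suc k)" and ?P2 = "p (Suc (Suc k))"
  have d00: "dt ?P0 ?v0 = 1" and d01: "dt ?P0 ?v1 = 1" and d11: "dt ?P1 ?v1 = 1"
    and d12: "dt ?P1 ?v2 = 1" and d22: "dt ?P2 ?v2 = 1" and d23: "dt ?P2 ?v3 = 1"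
    and P2S: "?P2 \<in> S"
    using pj[of k] pj[of "Suc k"] pj[of "Suc (Suc k)"] by auto
  have t0: "cross (?v1 - ?v0) (?v2 - ?v1) < 0" using assms(11) by blast
  have t1: "cross (?v2 - ?v1) (?v3 - ?v2) < 0" using assms(11) by blast
  define c0 where "c0 = cross (?v1 - ?v0) (0 - ?v0)"
  define c1 where "c1 = cross (?v2 - ?v1) (0 - ?v1)"
  define X where "X = cross ?P0 ?P1"
  have I1': "X * c0 * c1 < 0"
    using I1[OF d00 d01 d11 d12] t0 unfolding X_def c0_def c1_def by simp
  have c0nz: "c0 \<noteq> 0" and c1nz: "c1 \<noteq> 0" and Xnz: "X \<noteq> 0" using I1' by auto
  have P0neP1: "?P0 \<noteq> ?P1"
  proof
    assume "?P0 = ?P1"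
    then have "X = 0" unfolding X_def by (simp add: cross_def)
    then show False using Xnz by simp
  qed
  have P2v1: "dt ?P2 ?v1 \<noteq> 1"
  proof
    assume "dt ?P2 ?v1 = 1"
    then have "cross (?v2 - ?v1) (?v3 - ?v2) = 0" using collin d22 d23 by blast
    then show False using t1 by simp
  qed
  have P1neP2: "?P1 \<noteq> ?P2"
  proof
    assume e: "?P1 = ?P2"
    then have "cross (?v2 - ?v1) (?v3 - ?v2) = 0" using collin[of ?P1 ?v1 ?v2 ?v3] d11 d12 d23 by simp
    then show False using t1 by simp
  qed
  have alpha: "(dt ?P1 ?v3 - 1) * c1 > 0"
  proof -
    have "(dt ?P1 ?v3 - 1) * c1 = - cross (?v2 - ?v1) (?v3 - ?v1)"
      using LL[OF d11 d12] unfolding c1_def by blast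
    also have "cross (?v2 - ?v1) (?v3 - ?v1) = cross (?v2 - ?v1) (?v3 - ?v2)"
      by (simp add: cross_def algebra_simps)
    finally show ?thesis using t1 by simp
  qed
  have k1: "k + 1 = Suc k" and k2: "k + 2 = Suc (Suc k)" by simp_all
  have Dk: "origin_side (v k) (v (Suc k)) = (if c0 > 0 then Lft else Rgt)"
    unfolding origin_side_def c0_def by simp
  have Dk1: "origin_side (v (Suc k)) (v (Suc (Suc k))) = (if c1 > 0 then Lft else Rgt)"
    unfolding origin_side_def c1_def by simp
  show ?thesis unfolding Let_def k1 k2
  proof (intro allI impI, elim conjE)
    fix d
    assume dP: "d = ?P1 \<or> d = - ?P1"
      and dir: "if origin_side ?v1 ?v2 = Rgt then right_of ?P0 (?P0 + d) else left_of ?P0 (?P0 + d)"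
    define \<sigma> where "\<sigma> = dt d ?v1"
    have dsig: "d = \<sigma> *\<^sub>R ?P1" and sig: "\<sigma> = 1 \<or> \<sigma> = -1"
      using dP d11 unfolding \<sigma>_def by (auto simp: dt_neg_left)
    have crd: "cross ?P0 (?P0 + d) = \<sigma> * X"
      unfolding dsig X_def by (simp add: cross_def algebra_simps)
    have sg1: "\<sigma> * X * c1 > 0"
    proof (cases "c1 > 0")
      case True
      then have "\<sigma> * X > 0" using dir crd Dk1 by (simp add: left_of_def)
      then show ?thesis using True by simp
    next
      case False
      then have "c1 < 0" using c1nz by simp
      moreover have "\<sigma> * X < 0" using dir crd Dk1 False by (simp add: right_of_def)
      ultimately show ?thesis by (simp add: mult_neg_neg)
    qed
    have sg2: "\<sigma> * c0 < 0"
    proof -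
      have "(\<sigma> * X * c1) * (X * c0 * c1) < 0" using sg1 I1' by (rule mult_pos_neg)
      moreover have "(\<sigma> * X * c1) * (X * c0 * c1) = (\<sigma> * c0) * ((X * c1) * (X * c1))" by algebra
      moreover have "(X * c1) * (X * c1) > 0"
      proof -
        have "X * c1 \<noteq> 0" using Xnz c1nz by simp
        then show ?thesis using not_real_square_gt_zero by blast
      qed
      ultimately show ?thesis by (simp add: mult_less_0_iff)
    qed
    define u where "u = ?v2 - ?v1"
    have I2': "dt ?P0 u = - c1 * X" using I2[OF d11 d12, of ?P0] unfolding u_def c1_def X_def .
    have su: "\<sigma> * dt ?P0 u < 0" using sg1 I2' by (simp add: algebra_simps)
    define cc where "cc = - \<sigma> / dt ?P0 u"
    have unz: "dt ?P0 u \<noteq> 0" using su by auto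
    have ccpos: "cc > 0"
      using sig su unfolding cc_def by (auto simp: divide_pos_neg)
    have ccu: "cc * dt ?P0 u = - \<sigma>" unfolding cc_def using unz by simp
    define ts where "ts = 1 / cc"
    have tspos: "ts > 0" using ccpos unfolding ts_def by simp
    have tscc: "ts * cc = 1" using ccpos unfolding ts_def by simp
    define y where "y = (\<lambda>t. ?v1 + (t * cc) *\<^sub>R u)"
    have yP0: "dt ?P0 (y t) = 1 - t * \<sigma>" for t
    proof -
      have "dt ?P0 (y t) = 1 + t * (cc * dt ?P0 u)" unfolding y_def using d01 by (simp add: dt_lin)
      then show ?thesis using ccu by simp
    qed
    have yP1: "dt ?P1 (y t) = 1" for t
      unfolding y_def u_def using d11 d12 by (simp add: dt_lin)
    have Ptne: "?P0 + t *\<^sub>R d \<noteq> ?P1" for t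
    proof
      assume e: "?P0 + t *\<^sub>R d = ?P1"
      then have "dt (?P0 + t *\<^sub>R d) ?v1 = dt ?P1 ?v1" by simp
      then have "1 + t * \<sigma> = 1" using d01 d11 unfolding dsig by (simp add: dt_lin)
      then have "t = 0" using sig by auto
      then show False using e P0neP1 by simp
    qed
    have dtPt: "dt (?P0 + t *\<^sub>R d) (y t) = 1" for t
      using yP0[of t] yP1[of t] unfolding dsig by (simp add: dt_lin algebra_simps)
    have line_t: "Q \<in> line_thru (?P0 + t *\<^sub>R d) ?P1 \<longleftrightarrow> dt Q (y t) = 1" for t Q
      using line_dual[OF Ptne dtPt yP1] .
    have line_0: "Q \<in> line_thru ?P0 ?P1 \<longleftrightarrow> dt Q ?v1 = 1" for Q
      using line_dual[OF P0neP1 d01 d11] .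
    have yts: "y ts = ?v2" unfolding y_def u_def using tscc by simp
    define hit where "hit = (\<lambda>t. \<exists>Q\<in>S. Q \<in> line_thru (?P0 + t *\<^sub>R d) ?P1 \<and> Q \<notin> line_thru ?P0 ?P1)"
    have hit_iff: "hit t \<longleftrightarrow> (\<exists>Q\<in>S. dt Q (y t) = 1 \<and> dt Q ?v1 \<noteq> 1)" for t
      unfolding hit_def line_t line_0 by blast
    have hit_ts: "hit ts" unfolding hit_iff yts using P2S d22 P2v1 by blast
    have nohit: "\<not> hit s" if s: "0 \<le> s" "s < ts" for s
    proof
      assume "hit s"
      then obtain Q where Q: "Q \<in> S" "dt Q (y s) = 1" "dt Q ?v1 \<noteq> 1" unfolding hit_iff by blast
      define r where "r = s * cc"
      have r0: "0 \<le> r" using s ccpos unfolding r_def by simp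
      have "s * cc < ts * cc" using s(2) ccpos by (rule mult_strict_right_mono)
      then have r1: "r < 1" using tscc unfolding r_def by simp
      have eq: "(1 - r) * (dt Q ?v1 - 1) + r * (dt Q ?v2 - 1) = 0"
        using Q(2) unfolding y_def u_def r_def by (simp add: dt_lin algebra_simps)
      have ne: "dt Q ?v1 - 1 \<noteq> 0" using Q(3) by simp
      from side[OF Q(1)] show False
      proof
        assume "\<forall>x\<in>\<Delta>. dt Q x \<le> 1"
        then have a: "dt Q ?v1 - 1 < 0" and b: "dt Q ?v2 - 1 \<le> 0"
          using vin[of "Suc k"] vin[of "Suc (Suc k)"] ne by auto
        have "(1 - r) * (dt Q ?v1 - 1) < 0" using a r1 by (simp add: mult_pos_neg)
        moreover have "r * (dt Q ?v2 - 1) \<le> 0" using b r0 by (simp add: mult_nonneg_nonpos)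
        ultimately show False using eq by linarith
      next
        assume "\<forall>x\<in>\<Delta>. dt Q x \<ge> 1"
        then have a: "dt Q ?v1 - 1 > 0" and b: "dt Q ?v2 - 1 \<ge> 0"
          using vin[of "Suc k"] vin[of "Suc (Suc k)"] ne by auto
        have "(1 - r) * (dt Q ?v1 - 1) > 0" using a r1 by simp
        moreover have "r * (dt Q ?v2 - 1) \<ge> 0" using b r0 by simp
        ultimately show False using eq by linarith
      qed
    qed
    have G1: "0 \<le> ts \<and> hit ts \<and> (\<forall>s. 0 \<le> s \<and> s < ts \<longrightarrow> \<not> hit s)"
      using tspos hit_ts nohit by auto
    have G2: "t = ts" if H: "0 \<le> t \<and> hit t \<and> (\<forall>s. 0 \<le> s \<and> s < t \<longrightarrow> \<not> hit s)" for t
    proof (rule ccontr)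
      assume "t \<noteq> ts"
      then consider "t < ts" | "ts < t" by linarith
      then show False
      proof cases
        case 1 then show False using nohit[of t] H by blast
      next
        case 2 then show False using H hit_ts tspos by auto
      qed
    qed
    define Pst where "Pst = ?P0 + ts *\<^sub>R d"
    define Qs where "Qs = line_thru Pst ?P1 \<inter> S - {?P1}"
    have memQs: "Q \<in> line_thru Pst ?P1 \<longleftrightarrow> dt Q ?v2 = 1" for Q
      unfolding Pst_def line_t yts ..
    have P2Qs: "?P2 \<in> Qs" unfolding Qs_def using memQs P2S d22 P1neP2 by auto
    define W where "W = ?P1 - Pst"
    have Wnz: "W \<noteq> 0" unfolding W_def Pst_def using Ptne[of ts] by auto
    have param: "\<exists>a. Q = ?P1 + a *\<^sub>R W" if Qin: "Q \<in> line_thru Pst ?P1" for Q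
    proof -
      obtain t where "Q = Pst + t *\<^sub>R (?P1 - Pst)" using Qin unfolding line_thru_def by blast
      then have "Q = ?P1 + (t - 1) *\<^sub>R W" unfolding W_def by (simp add: algebra_simps)
      then show ?thesis by blast
    qed
    have uniq: "a = b" if "?P1 + a *\<^sub>R W = ?P1 + b *\<^sub>R W" for a b
      using that Wnz by (simp add: scaleR_cancel_right)
    define A where "A = dt W (?v1 - ?v2)"
    define B where "B = dt W (?v3 - ?v2)"
    define \<alpha> where "\<alpha> = dt ?P1 ?v3 - 1"
    have dPst2: "dt Pst ?v2 = 1" using dtPt[of ts] unfolding Pst_def yts .
    have Aeq: "A = - (ts * \<sigma>)"
      unfolding A_def W_def Pst_def dsig using d01 d11 d12 dPst2[unfolded Pst_def dsig]
      by (simp add: dt_lin algebra_simps)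
    obtain a2 where a2: "?P2 = ?P1 + a2 *\<^sub>R W" using param memQs d22 by blast
    have a2B: "\<alpha> + a2 * B = 0"
      using d23 d22 d12 unfolding \<alpha>_def B_def a2 by (simp add: dt_lin algebra_simps)
    have Qvals: "dt Q ?v1 - 1 = a * A \<and> dt Q ?v3 - 1 = \<alpha> + a * B" if "Q = ?P1 + a *\<^sub>R W" "dt Q ?v2 = 1" for Q a
      using that d11 d12 unfolding A_def B_def \<alpha>_def by (simp add: dt_lin algebra_simps)
    have key: "0 \<le> (a * a2 * (a2 - a)) * (A * \<alpha>)"
      if Q: "Q \<in> S" "dt Q ?v2 = 1" "Q = ?P1 + a *\<^sub>R W" for Q a
    proof -
      have prod: "0 \<le> (dt Q ?v1 - 1) * (dt Q ?v3 - 1)"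
        using side[OF Q(1)] vin[of "Suc k"] vin[of "Suc (Suc (Suc k))"]
        by (auto intro: mult_nonpos_nonpos mult_nonneg_nonneg)
      then have "0 \<le> (a * A) * (\<alpha> + a * B)" using Qvals[OF Q(3) Q(2)] by simp
      then have "0 \<le> (a2 * a2) * ((a * A) * (\<alpha> + a * B))" by simp
      moreover have "(a2 * a2) * ((a * A) * (\<alpha> + a * B)) = (a * a2 * (a2 - a)) * (A * \<alpha>)"
      proof -
        have "\<alpha> = - (a2 * B)" using a2B by simp
        then show ?thesis by (simp add: algebra_simps)
      qed
      ultimately show ?thesis by simp
    qed
    have sgn: "A * \<alpha> > 0 \<longleftrightarrow> c0 > 0 \<longleftrightarrow> c1 > 0"
      and Aanz: "A * \<alpha> \<noteq> 0"
    proof -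
      have al: "\<alpha> > 0 \<longleftrightarrow> c1 > 0" and alnz: "\<alpha> \<noteq> 0"
        using alpha c1nz unfolding \<alpha>_def by (auto simp: zero_less_mult_iff)
      show "A * \<alpha> \<noteq> 0" using alnz tspos sig unfolding Aeq by auto
      show "A * \<alpha> > 0 \<longleftrightarrow> c0 > 0 \<longleftrightarrow> c1 > 0"
        using sig
      proof
        assume s1: "\<sigma> = 1"
        then have "c0 < 0" using sg2 by simp
        then show ?thesis using s1 al alnz tspos c1nz unfolding Aeq
          by (auto simp: mult_less_0_iff zero_less_mult_iff)
      next
        assume s1: "\<sigma> = -1"
        then have "c0 > 0" using sg2 by simp
        then show ?thesis using s1 al alnz tspos c1nz unfolding Aeq
          by (auto simp: mult_less_0_iff zero_less_mult_iff)
      qed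
    qed
    have a2nz: "a2 \<noteq> 0" using a2 P1neP2 by auto
    have G3: "?P2 \<in> Qs \<and>
      (if origin_side ?v0 ?v1 = origin_side ?v1 ?v2
       then \<forall>Q\<in>Qs. \<not> cyc_before Pst ?P1 ?P2 Q
       else \<forall>Q\<in>Qs. \<not> cyc_before Pst ?P1 Q ?P2)"
    proof (cases "A * \<alpha> > 0")
      case True
      then have eqD: "origin_side ?v0 ?v1 = origin_side ?v1 ?v2" using sgn Dk Dk1 by auto
      have "\<not> cyc_before Pst ?P1 ?P2 Q" if QQ: "Q \<in> Qs" for Q
      proof
        assume "cyc_before Pst ?P1 ?P2 Q"
        then obtain a b where ab: "?P2 = ?P1 + a *\<^sub>R W" "Q = ?P1 + b *\<^sub>R W" "a \<noteq> 0" "b \<noteq> 0"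
          "(0 < a \<and> b < 0) \<or> (0 < a * b \<and> a < b)"
          unfolding cyc_before_def W_def by blast
        have "a = a2" using ab(1) a2 Wnz by auto
        have QS: "Q \<in> S" "dt Q ?v2 = 1" using QQ memQs unfolding Qs_def by auto
        have "0 \<le> (b * a2 * (a2 - b)) * (A * \<alpha>)" using key[OF QS ab(2)] .
        then have k0: "0 \<le> (b * a2) * (a2 - b)" using True by (simp add: zero_le_mult_iff)
        from ab(5) show False
        proof
          assume "0 < a \<and> b < 0"
          then have "(b * a2) * (a2 - b) < 0" using \<open>a = a2\<close> by (simp add: mult_neg_pos)
          then show False using k0 by simp
        next
          assume "0 < a * b \<and> a < b"
          then have h: "b * a2 > 0" "a2 - b < 0" using \<open>a = a2\<close> by (auto simp: mult.commute)
          have "(b * a2) * (a2 - b) < 0" using mult_pos_neg[OF h] .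
          then show False using k0 by simp
        qed
      qed
      then show ?thesis using P2Qs eqD by simp
    next
      case False
      then have lt: "A * \<alpha> < 0" using Aanz by linarith
      then have neD: "origin_side ?v0 ?v1 \<noteq> origin_side ?v1 ?v2" using sgn Dk Dk1 c0nz c1nz by auto
      have "\<not> cyc_before Pst ?P1 Q ?P2" if QQ: "Q \<in> Qs" for Q
      proof
        assume "cyc_before Pst ?P1 Q ?P2"
        then obtain a b where ab: "Q = ?P1 + a *\<^sub>R W" "?P2 = ?P1 + b *\<^sub>R W" "a \<noteq> 0" "b \<noteq> 0"
          "(0 < a \<and> b < 0) \<or> (0 < a * b \<and> a < b)"
          unfolding cyc_before_def W_def by blast
        have "b = a2" using ab(2) a2 Wnz by auto
        have QS: "Q \<in> S" "dt Q ?v2 = 1" using QQ memQs unfolding Qs_def by auto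
        have kk: "0 \<le> (a * a2 * (a2 - a)) * (A * \<alpha>)" using key[OF QS ab(1)] .
        have k0: "(a * a2) * (a2 - a) \<le> 0"
        proof (rule ccontr)
          assume "\<not> (a * a2) * (a2 - a) \<le> 0"
          then have "(a * a2) * (a2 - a) > 0" by simp
          then have "((a * a2) * (a2 - a)) * (A * \<alpha>) < 0" using lt by (rule mult_pos_neg)
          then show False using kk by simp
        qed
        from ab(5) show False
        proof
          assume "0 < a \<and> b < 0"
          then have "(a * a2) * (a2 - a) > 0" using \<open>b = a2\<close> by (simp add: mult_neg_neg mult_pos_neg)
          then show False using k0 by simp
        next
          assume "0 < a * b \<and> a < b"
          then have "(a * a2) * (a2 - a) > 0" using \<open>b = a2\<close> by simp
          then show False using k0 by simp
        qed
      qed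
      then show ?thesis using P2Qs neD by simp
    qed
    show "(\<exists>t\<ge>0. (\<exists>Q\<in>S. Q \<in> line_thru (?P0 + t *\<^sub>R d) ?P1 \<and> Q \<notin> line_thru ?P0 ?P1) \<and>
                   (\<forall>s. 0 \<le> s \<and> s < t \<longrightarrow>
                        \<not> (\<exists>Q\<in>S. Q \<in> line_thru (?P0 + s *\<^sub>R d) ?P1 \<and> Q \<notin> line_thru ?P0 ?P1))) \<and>
            (\<forall>t. 0 \<le> t \<and>
                 (\<exists>Q\<in>S. Q \<in> line_thru (?P0 + t *\<^sub>R d) ?P1 \<and> Q \<notin> line_thru ?P0 ?P1) \<and>
                 (\<forall>s. 0 \<le> s \<and> s < t \<longrightarrow>
                      \<not> (\<exists>Q\<in>S. Q \<in> line_thru (?P0 + s *\<^sub>R d) ?P1 \<and> Q \<notin> line_thru ?P0 ?P1)) \<longrightarrow>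
                 ?P2 \<in> line_thru (?P0 + t *\<^sub>R d) ?P1 \<inter> S - {?P1} \<and>
                 (if origin_side ?v0 ?v1 = origin_side ?v1 ?v2
                  then \<forall>Q\<in>line_thru (?P0 + t *\<^sub>R d) ?P1 \<inter> S - {?P1}. \<not> cyc_before (?P0 + t *\<^sub>R d) ?P1 ?P2 Q
                  else \<forall>Q\<in>line_thru (?P0 + t *\<^sub>R d) ?P1 \<inter> S - {?P1}. \<not> cyc_before (?P0 + t *\<^sub>R d) ?P1 Q ?P2))"
    proof (rule conjI)
      show "\<exists>t\<ge>0. (\<exists>Q\<in>S. Q \<in> line_thru (?P0 + t *\<^sub>R d) ?P1 \<and> Q \<notin> line_thru ?P0 ?P1) \<and>
                   (\<forall>s. 0 \<le> s \<and> s < t \<longrightarrow>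
                        \<not> (\<exists>Q\<in>S. Q \<in> line_thru (?P0 + s *\<^sub>R d) ?P1 \<and> Q \<notin> line_thru ?P0 ?P1))"
        using G1 unfolding hit_def by blast
    next
      show "\<forall>t. 0 \<le> t \<and>
                 (\<exists>Q\<in>S. Q \<in> line_thru (?P0 + t *\<^sub>R d) ?P1 \<and> Q \<notin> line_thru ?P0 ?P1) \<and>
                 (\<forall>s. 0 \<le> s \<and> s < t \<longrightarrow>
                      \<not> (\<exists>Q\<in>S. Q \<in> line_thru (?P0 + s *\<^sub>R d) ?P1 \<and> Q \<notin> line_thru ?P0 ?P1)) \<longrightarrow>
                 ?P2 \<in> line_thru (?P0 + t *\<^sub>R d) ?P1 \<inter> S - {?P1} \<and>
                 (if origin_side ?v0 ?v1 = origin_side ?v1 ?v2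
                  then \<forall>Q\<in>line_thru (?P0 + t *\<^sub>R d) ?P1 \<inter> S - {?P1}. \<not> cyc_before (?P0 + t *\<^sub>R d) ?P1 ?P2 Q
                  else \<forall>Q\<in>line_thru (?P0 + t *\<^sub>R d) ?P1 \<inter> S - {?P1}. \<not> cyc_before (?P0 + t *\<^sub>R d) ?P1 Q ?P2)"
      proof (rule allI, rule impI)
      fix t
      assume "0 \<le> t \<and>
                 (\<exists>Q\<in>S. Q \<in> line_thru (?P0 + t *\<^sub>R d) ?P1 \<and> Q \<notin> line_thru ?P0 ?P1) \<and>
                 (\<forall>s. 0 \<le> s \<and> s < t \<longrightarrow>
                      \<not> (\<exists>Q\<in>S. Q \<in> line_thru (?P0 + s *\<^sub>R d) ?P1 \<and> Q \<notin> line_thru ?P0 ?P1))"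
      then have "t = ts" using G2 unfolding hit_def by blast
      then show "?P2 \<in> line_thru (?P0 + t *\<^sub>R d) ?P1 \<inter> S - {?P1} \<and>
                 (if origin_side ?v0 ?v1 = origin_side ?v1 ?v2
                  then \<forall>Q\<in>line_thru (?P0 + t *\<^sub>R d) ?P1 \<inter> S - {?P1}. \<not> cyc_before (?P0 + t *\<^sub>R d) ?P1 ?P2 Q
                  else \<forall>Q\<in>line_thru (?P0 + t *\<^sub>R d) ?P1 \<inter> S - {?P1}. \<not> cyc_before (?P0 + t *\<^sub>R d) ?P1 Q ?P2)"
        using G3 unfolding Pst_def Qs_def by simp
    qed
    qed
  qed
qed

end
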